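(* In the setting described in the context, assume (F1) and (F2). Then for all $t\ge0$, $$\|w(t+1)-n\pi\otimes\bar w(t+1)\|_{\pi\otimes1_d}\le\sigma_W(1+\alpha L\delta)\|w(t)-n\pi\otimes\bar w(t)\|_{\pi\otimes1_d}+\alpha L\sigma_WD_1[t]\,\|\bar w(t)-w_*\|+\alpha\sigma_WD_2[t],$$ where $D_1[t]=\delta\|1_n-n\pi\|_\pi\sigma_W^t+\sqrt{\sum_{j=1}^n1/\pi_j}$ and $D_2[t]=L\delta\|1_n-n\pi\|_\pi\sigma_W^t\|w_*\|+\|\nabla F(1_n\otimes w_* )\|_{\pi\otimes1_d}$.
   Context: $G=(V,E)$ directed on $\{1,\dots,n\}$, self-loop at each vertex, strongly connected; $d_j=|\{i:(j,i)\in E\}|$, $W_{ij}=1/d_j$ if $(j,i)\in E$, else $0$. $\pi$: $W\pi=\pi$, $\pi_i>0$, $\sum\pi_i=1$; $W^\infty=\pi1_n^\top$. $\|x\|_\pi=(\sum_ix_i^2/\pi_i)^{1/2}$ on $\mathbb R^n$, $|||\cdot|||_\pi$ the induced operator norm, $\sigma_W=|||W-W^\infty|||_\pi$ (known $<1$). On $\mathbb R^{nd}$, $\|x\|_{\pi\otimes1_d}=(\sum_i\|x_i\|^2/\pi_i)^{1/2}$. $v\otimes u=\mathrm{col}(v_1u,\dots,v_nu)$. $f_i:\mathbb R^d\to\mathbb R$, $f=\frac1n\sum f_i$; (F1) each $\nabla f_i$ is $L_i$-Lipschitz, $L=\max L_i$; (F2) $f$ is $\beta$-strongly convex, $\beta>0$;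 $w_*$ is the minimizer of $f$. $\nabla F(x)=\mathrm{col}(\nabla f_1(x_1),\dots,\nabla f_n(x_n))$. Algorithm with stepsize $\alpha>0$: given $w(0)\in\mathbb R^{nd}$, $y(0)=1_n$; for $t\ge0$: $z_i(t)=w_i(t)/y_i(t)$, $x_i(t)=w_i(t)-\alpha\nabla f_i(z_i(t))$, $w_i(t+1)=\sum_jW_{ij}x_j(t)$, $y_i(t+1)=\sum_jW_{ij}y_j(t)$. $\bar w(t)=\frac1n\sum_iw_i(t)$, $\delta=\sup_{t\ge0}\max_i1/y_i(t)$. *)

theory Defs
  imports "HOL-Analysis.Analysis"
begin

text \<open>Vertices are the elements of a finite type 'n (so n = CARD('n)); points of R^d are
elements of a Euclidean space 'a. Vectors in R^n are functions 'n => real, n x n matrices are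
functions 'n => 'n => real, and stacked vectors in R^{nd} are functions 'n => 'a.\<close>

definition out_degree :: "('n \<times> 'n) set \<Rightarrow> 'n \<Rightarrow> nat" where
  "out_degree E j = card {i. (j, i) \<in> E}"

definition mixW :: "('n \<times> 'n) set \<Rightarrow> 'n \<Rightarrow> 'n \<Rightarrow> real" where
  "mixW E i j = (if (j, i) \<in> E then 1 / real (out_degree E j) else 0)"

definition mat_vec :: "('n::finite \<Rightarrow> 'n \<Rightarrow> real) \<Rightarrow> ('n \<Rightarrow> real) \<Rightarrow> 'n \<Rightarrow> real" where
  "mat_vec M x = (\<lambda>i. \<Sum>j\<in>UNIV. M i j * x j)"

definition Winf :: "('n::finite \<Rightarrow> real) \<Rightarrow> 'n \<Rightarrow> 'n \<Rightarrow> real" where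
  "Winf \<pi> i j = \<pi> i"

definition pi_norm :: "('n::finite \<Rightarrow> real) \<Rightarrow> ('n \<Rightarrow> real) \<Rightarrow> real" where
  "pi_norm \<pi> x = sqrt (\<Sum>i\<in>UNIV. (x i)\<^sup>2 / \<pi> i)"

definition pi_opnorm :: "('n::finite \<Rightarrow> real) \<Rightarrow> ('n \<Rightarrow> 'n \<Rightarrow> real) \<Rightarrow> real" where
  "pi_opnorm \<pi> M = (SUP x\<in>{x. \<exists>i. x i \<noteq> 0}. pi_norm \<pi> (mat_vec M x) / pi_norm \<pi> x)"

definition sigmaW :: "('n::finite \<times> 'n) set \<Rightarrow> ('n \<Rightarrow> real) \<Rightarrow> real" where
  "sigmaW E \<pi> = pi_opnorm \<pi> (\<lambda>i j. mixW E i j - Winf \<pi> i j)"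

definition blk_norm :: "('n::finite \<Rightarrow> real) \<Rightarrow> ('n \<Rightarrow> 'a::real_normed_vector) \<Rightarrow> real" where
  "blk_norm \<pi> x = sqrt (\<Sum>i\<in>UNIV. (norm (x i))\<^sup>2 / \<pi> i)"

definition strongly_convex_on :: "real \<Rightarrow> 'a::real_inner set \<Rightarrow> ('a \<Rightarrow> real) \<Rightarrow> bool" where
  "strongly_convex_on \<beta> S f \<longleftrightarrow> convex_on S (\<lambda>x. f x - (\<beta> / 2) * (norm x)\<^sup>2)"

primrec yseq :: "('n::finite \<times> 'n) set \<Rightarrow> nat \<Rightarrow> 'n \<Rightarrow> real" where
  "yseq E 0 = (\<lambda>i. 1)"
| "yseq E (Suc t) = mat_vec (mixW E) (yseq E t)"

primrec wseq :: "('n::finite \<times> 'n) set \<Rightarrow> real \<Rightarrow> ('n \<Rightarrow> 'a \<Rightarrow> 'a::real_normed_vector)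
    \<Rightarrow> ('n \<Rightarrow> 'a) \<Rightarrow> nat \<Rightarrow> 'n \<Rightarrow> 'a" where
  "wseq E \<alpha> g w0 0 = w0"
| "wseq E \<alpha> g w0 (Suc t) =
     (\<lambda>i. \<Sum>j\<in>UNIV. mixW E i j *\<^sub>R
        (wseq E \<alpha> g w0 t j - \<alpha> *\<^sub>R g j ((1 / yseq E t j) *\<^sub>R wseq E \<alpha> g w0 t j)))"

definition wbar :: "('n::finite \<Rightarrow> 'a::real_vector) \<Rightarrow> 'a" where
  "wbar w = (1 / real CARD('n)) *\<^sub>R (\<Sum>i\<in>UNIV. w i)"

definition deltaY :: "('n::finite \<times> 'n) set \<Rightarrow> real" where
  "deltaY E = (SUP t. Max (range (\<lambda>i. 1 / yseq E t i)))"

end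

theory Submission imports Defs begin

definition wl2 :: "('n::finite \<Rightarrow> real) \<Rightarrow> ('n \<Rightarrow> real) \<Rightarrow> real" where
  "wl2 \<pi> h = L2_set (\<lambda>i. h i / sqrt (\<pi> i)) UNIV"

lemma blk_wl2:
  assumes "\<forall>i. \<pi> i > 0"
  shows "blk_norm \<pi> x = wl2 \<pi> (\<lambda>i. norm (x i))"
  unfolding blk_norm_def wl2_def L2_set_def using assms
  by (simp add: power_divide less_imp_le)

lemma pi_wl2:
  assumes "\<forall>i. \<pi> i > 0"
  shows "pi_norm \<pi> x = wl2 \<pi> (\<lambda>i. \<bar>x i\<bar>)"
  unfolding pi_norm_def wl2_def L2_set_def using assms
  by (simp add: power_divide less_imp_le)

lemma wl2_mono:
  assumes "\<forall>i. \<pi> i > 0" "\<forall>i. 0 \<le> h i" "\<forall>i. h i \<le> g i"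
  shows "wl2 \<pi> h \<le> wl2 \<pi> g"
  unfolding wl2_def
proof (rule L2_set_mono)
  fix i
  show "h i / sqrt (\<pi> i) \<le> g i / sqrt (\<pi> i)" using assms by (intro divide_right_mono) (auto simp: less_imp_le)
  show "0 \<le> h i / sqrt (\<pi> i)" using assms by (intro divide_nonneg_nonneg) (auto simp: less_imp_le)
qed

lemma wl2_add: "wl2 \<pi> (\<lambda>i. h i + g i) \<le> wl2 \<pi> h + wl2 \<pi> g"
  unfolding wl2_def using L2_set_triangle_ineq[of "\<lambda>i. h i / sqrt (\<pi> i)" "\<lambda>i. g i / sqrt (\<pi> i)" UNIV]
  by (simp add: add_divide_distrib)

lemma wl2_scale: "0 \<le> a \<Longrightarrow> wl2 \<pi> (\<lambda>i. a * h i) = a * wl2 \<pi> h"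
  unfolding wl2_def by (simp add: L2_set_right_distrib)

lemma wl2_const:
  assumes "\<forall>i. \<pi> i > 0" "0 \<le> c"
  shows "wl2 \<pi> (\<lambda>i. c) = c * sqrt (\<Sum>j\<in>UNIV. 1 / \<pi> j)"
proof -
  have "(\<Sum>i\<in>UNIV. c\<^sup>2 / \<pi> i) = c\<^sup>2 * (\<Sum>j\<in>UNIV. 1 / \<pi> j)"
    by (simp add: sum_distrib_left)
  then show ?thesis
    unfolding wl2_def L2_set_def using assms
    by (simp add: power_divide less_imp_le real_sqrt_mult)
qed

lemma wl2_nonneg: "0 \<le> wl2 \<pi> h"
  unfolding wl2_def by simp

lemma wl2_bound2:
  assumes pos: "\<forall>i. \<pi> i > 0" and "\<forall>i. 0 \<le> h i" "\<forall>i. h i \<le> a * p i + b * q i"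
    "0 \<le> a" "0 \<le> b" "\<forall>i. 0 \<le> p i" "\<forall>i. 0 \<le> q i"
  shows "wl2 \<pi> h \<le> a * wl2 \<pi> p + b * wl2 \<pi> q"
proof -
  have "wl2 \<pi> h \<le> wl2 \<pi> (\<lambda>i. a * p i + b * q i)" by (rule wl2_mono) (use assms in auto)
  also have "\<dots> \<le> wl2 \<pi> (\<lambda>i. a * p i) + wl2 \<pi> (\<lambda>i. b * q i)" by (rule wl2_add)
  finally show ?thesis using assms by (simp add: wl2_scale)
qed

lemma wl2_bound3:
  assumes pos: "\<forall>i. \<pi> i > 0" and "\<forall>i. 0 \<le> h i" "\<forall>i. h i \<le> a * p i + b * q i + c * r i"
    "0 \<le> a" "0 \<le> b" "0 \<le> c" "\<forall>i. 0 \<le> p i" "\<forall>i. 0 \<le> q i" "\<forall>i. 0 \<le> r i"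
  shows "wl2 \<pi> h \<le> a * wl2 \<pi> p + b * wl2 \<pi> q + c * wl2 \<pi> r"
proof -
  have "wl2 \<pi> h \<le> wl2 \<pi> (\<lambda>i. (a * p i + b * q i) + c * r i)" by (rule wl2_mono) (use assms in auto)
  also have "\<dots> \<le> wl2 \<pi> (\<lambda>i. a * p i + b * q i) + wl2 \<pi> (\<lambda>i. c * r i)" by (rule wl2_add)
  also have "\<dots> \<le> wl2 \<pi> (\<lambda>i. a * p i) + wl2 \<pi> (\<lambda>i. b * q i) + wl2 \<pi> (\<lambda>i. c * r i)"
    using wl2_add[of \<pi> "\<lambda>i. a * p i" "\<lambda>i. b * q i"] by simp
  finally show ?thesis using assms by (simp add: wl2_scale)
qed


definition bmat :: "('n::finite \<Rightarrow> 'n \<Rightarrow> real) \<Rightarrow> ('n \<Rightarrow> 'a::real_vector) \<Rightarrow> 'n \<Rightarrow> 'a" where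
  "bmat M x = (\<lambda>i. \<Sum>j\<in>UNIV. M i j *\<^sub>R x j)"

lemma pi_norm_nonneg: "\<forall>i. \<pi> i > 0 \<Longrightarrow> 0 \<le> pi_norm \<pi> x"
  by (simp add: pi_wl2 wl2_nonneg)

lemma pi_norm_comp_le:
  assumes pos: "\<forall>i. \<pi> i > 0"
  shows "\<bar>x j\<bar> \<le> pi_norm \<pi> x * sqrt (\<pi> j)"
proof -
  have "\<bar>x j\<bar> / sqrt (\<pi> j) \<le> pi_norm \<pi> x"
    unfolding pi_wl2[OF pos] wl2_def
    by (rule member_le_L2_set[of UNIV j "\<lambda>i. \<bar>x i\<bar> / sqrt (\<pi> i)", simplified])
  moreover have "sqrt (\<pi> j) > 0" using pos by simp
  ultimately show ?thesis by (simp add: divide_le_eq)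
qed

lemma pi_norm_pos:
  assumes pos: "\<forall>i. \<pi> i > 0" and "x j \<noteq> 0"
  shows "pi_norm \<pi> x > 0"
proof -
  have "0 < \<bar>x j\<bar>" using assms by simp
  also have "\<dots> \<le> pi_norm \<pi> x * sqrt (\<pi> j)" by (rule pi_norm_comp_le[OF pos])
  finally show ?thesis using pi_norm_nonneg[OF pos, of x] pos
    by (metis less_eq_real_def mult_eq_0_iff not_le zero_less_mult_iff real_sqrt_gt_0_iff)
qed

lemma crude_bound:
  assumes pos: "\<forall>i. \<pi> i > 0"
  shows "pi_norm \<pi> (mat_vec M x)
          \<le> wl2 \<pi> (\<lambda>i. \<Sum>j\<in>UNIV. \<bar>M i j\<bar> * sqrt (\<pi> j)) * pi_norm \<pi> x"
proof -
  let ?N = "pi_norm \<pi> x"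
  have N0: "0 \<le> ?N" by (rule pi_norm_nonneg[OF pos])
  have "\<bar>mat_vec M x i\<bar> \<le> ?N * (\<Sum>j\<in>UNIV. \<bar>M i j\<bar> * sqrt (\<pi> j))" for i
  proof -
    have "\<bar>mat_vec M x i\<bar> \<le> (\<Sum>j\<in>UNIV. \<bar>M i j * x j\<bar>)"
      unfolding mat_vec_def by (rule sum_abs)
    also have "\<dots> \<le> (\<Sum>j\<in>UNIV. \<bar>M i j\<bar> * (?N * sqrt (\<pi> j)))"
      by (rule sum_mono) (simp add: abs_mult mult_left_mono pi_norm_comp_le[OF pos])
    also have "\<dots> = ?N * (\<Sum>j\<in>UNIV. \<bar>M i j\<bar> * sqrt (\<pi> j))"
      by (simp add: sum_distrib_left mult_ac)
    finally show ?thesis .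
  qed
  then have "wl2 \<pi> (\<lambda>i. \<bar>mat_vec M x i\<bar>) \<le> wl2 \<pi> (\<lambda>i. ?N * (\<Sum>j\<in>UNIV. \<bar>M i j\<bar> * sqrt (\<pi> j)))"
    by (intro wl2_mono) (auto simp: pos)
  also have "\<dots> = ?N * wl2 \<pi> (\<lambda>i. \<Sum>j\<in>UNIV. \<bar>M i j\<bar> * sqrt (\<pi> j))"
    by (rule wl2_scale[OF N0])
  finally show ?thesis by (simp add: pi_wl2[OF pos] mult.commute)
qed

lemma opnorm_facts:
  assumes pos: "\<forall>i. \<pi> i > 0"
  shows "0 \<le> pi_opnorm \<pi> M" "pi_norm \<pi> (mat_vec M x) \<le> pi_opnorm \<pi> M * pi_norm \<pi> x"
proof -
  let ?S = "{x. \<exists>i. x i \<noteq> 0}"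
  let ?r = "\<lambda>x. pi_norm \<pi> (mat_vec M x) / pi_norm \<pi> x"
  let ?B = "wl2 \<pi> (\<lambda>i. \<Sum>j\<in>UNIV. \<bar>M i j\<bar> * sqrt (\<pi> j))"
  have rb: "?r x \<le> ?B" if "x \<in> ?S" for x
  proof -
    from that obtain i where "x i \<noteq> 0" by auto
    then have "pi_norm \<pi> x > 0" by (rule pi_norm_pos[OF pos])
    then show ?thesis using crude_bound[OF pos, of M x] by (simp add: divide_le_eq)
  qed
  have bdd: "bdd_above (?r ` ?S)" using rb by (auto intro!: bdd_aboveI)
  have one: "(\<lambda>i. 1::real) \<in> ?S" by simp
  have "0 \<le> ?r (\<lambda>i. 1)" by (simp add: pi_norm_nonneg[OF pos])
  also have "\<dots> \<le> pi_opnorm \<pi> M" unfolding pi_opnorm_def by (rule cSUP_upper[OF one bdd])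
  finally show nn: "0 \<le> pi_opnorm \<pi> M" .
  show "pi_norm \<pi> (mat_vec M x) \<le> pi_opnorm \<pi> M * pi_norm \<pi> x"
  proof (cases "x \<in> ?S")
    case True
    then obtain i where "x i \<noteq> 0" by auto
    then have p: "pi_norm \<pi> x > 0" by (rule pi_norm_pos[OF pos])
    have "?r x \<le> pi_opnorm \<pi> M" unfolding pi_opnorm_def by (rule cSUP_upper[OF True bdd])
    then show ?thesis using p by (simp add: divide_le_eq)
  next
    case False
    then have "x = (\<lambda>i. 0)" by auto
    then have "mat_vec M x = (\<lambda>i. 0)" by (simp add: mat_vec_def)
    then show ?thesis using nn \<open>x = (\<lambda>i. 0)\<close> by (simp add: pi_norm_def)
  qed
qed

lemma norm_sq_basis: "(norm (x::'a::euclidean_space))\<^sup>2 = (\<Sum>b\<in>Basis. (x \<bullet> b)\<^sup>2)"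
  unfolding power2_norm_eq_inner by (subst euclidean_inner) (simp add: power2_eq_square)

lemma blk_basis:
  assumes pos: "\<forall>i. \<pi> i > 0"
  shows "blk_norm \<pi> (x :: 'n::finite \<Rightarrow> 'a::euclidean_space)
         = sqrt (\<Sum>b\<in>Basis. (pi_norm \<pi> (\<lambda>i. x i \<bullet> b))\<^sup>2)"
proof -
  have "(pi_norm \<pi> (\<lambda>i. x i \<bullet> b))\<^sup>2 = (\<Sum>i\<in>UNIV. (x i \<bullet> b)\<^sup>2 / \<pi> i)" for b
    unfolding pi_norm_def using pos by (simp add: sum_nonneg less_imp_le)
  then have "(\<Sum>b\<in>Basis. (pi_norm \<pi> (\<lambda>i. x i \<bullet> b))\<^sup>2)
        = (\<Sum>b\<in>Basis. \<Sum>i\<in>UNIV. (x i \<bullet> b)\<^sup>2 / \<pi> i)" by simp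
  also have "\<dots> = (\<Sum>i\<in>UNIV. \<Sum>b\<in>Basis. (x i \<bullet> b)\<^sup>2 / \<pi> i)" by (rule sum.swap)
  also have "\<dots> = (\<Sum>i\<in>UNIV. (norm (x i))\<^sup>2 / \<pi> i)"
    by (simp add: norm_sq_basis sum_divide_distrib)
  finally show ?thesis unfolding blk_norm_def by simp
qed

lemma blk_opnorm:
  assumes pos: "\<forall>i. \<pi> i > 0"
  shows "blk_norm \<pi> (bmat M (x :: 'n::finite \<Rightarrow> 'a::euclidean_space))
         \<le> pi_opnorm \<pi> M * blk_norm \<pi> x"
proof -
  let ?s = "pi_opnorm \<pi> M"
  have s0: "0 \<le> ?s" by (rule opnorm_facts(1)[OF pos])
  have comp: "(\<lambda>i. bmat M x i \<bullet> b) = mat_vec M (\<lambda>j. x j \<bullet> b)" for b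
    by (simp add: bmat_def mat_vec_def inner_sum_left)
  have "blk_norm \<pi> (bmat M x) = sqrt (\<Sum>b\<in>Basis. (pi_norm \<pi> (mat_vec M (\<lambda>j. x j \<bullet> b)))\<^sup>2)"
    by (simp add: blk_basis[OF pos] comp)
  also have "\<dots> \<le> sqrt (\<Sum>b\<in>Basis. (?s * pi_norm \<pi> (\<lambda>j. x j \<bullet> b))\<^sup>2)"
    by (intro real_sqrt_le_mono sum_mono power_mono opnorm_facts(2)[OF pos] pi_norm_nonneg[OF pos])
  also have "\<dots> = ?s * blk_norm \<pi> x"
    using s0 by (simp add: blk_basis[OF pos] power_mult_distrib real_sqrt_mult
        flip: sum_distrib_left)
  finally show ?thesis .
qed


lemma card_pos_real: "real CARD('n::finite) \<ge> 1"
  by (simp add: Suc_le_eq)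

lemma deg_bounds:
  assumes loops: "\<forall>i. (i, i) \<in> E"
  shows "1 \<le> out_degree E (j::'n::finite)" "out_degree E j \<le> CARD('n)"
proof -
  have "{j} \<subseteq> {i. (j, i) \<in> E}" using loops by auto
  then have "card {j} \<le> card {i. (j, i) \<in> E}" by (rule card_mono[rotated]) auto
  then show "1 \<le> out_degree E j" unfolding out_degree_def by simp
  show "out_degree E j \<le> CARD('n)" unfolding out_degree_def by (rule card_mono) auto
qed

lemma W_nonneg: "0 \<le> mixW E i j"
  by (simp add: mixW_def)

lemma colsum:
  assumes loops: "\<forall>i. (i, i) \<in> E"
  shows "(\<Sum>i\<in>UNIV. mixW E i (j::'n::finite)) = 1"
proof -
  have "(\<Sum>i\<in>UNIV. mixW E i j) = (\<Sum>i\<in>{i. (j, i) \<in> E}. 1 / real (out_degree E j))"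
    unfolding mixW_def by (simp add: sum.inter_filter[symmetric])
  also have "\<dots> = 1" using deg_bounds(1)[OF loops, of j] loops by (auto simp: out_degree_def)
  finally show ?thesis .
qed

lemma W_edge:
  assumes loops: "\<forall>i. (i, i) \<in> E" and "(j, i) \<in> E"
  shows "mixW E i (j::'n::finite) \<ge> 1 / real CARD('n)"
proof -
  have "1 \<le> real (out_degree E j)" "real (out_degree E j) \<le> real CARD('n)"
    using deg_bounds[OF loops, of j] by auto
  then show ?thesis using assms(2) unfolding mixW_def by (simp add: frac_le)
qed

lemma y_nonneg: "0 \<le> yseq E t i"
  by (induction t arbitrary: i) (auto simp: mat_vec_def W_nonneg intro!: sum_nonneg)

lemma y_sum:
  assumes loops: "\<forall>i. (i, i) \<in> E"
  shows "(\<Sum>i\<in>UNIV. yseq E t (i::'n::finite)) = real CARD('n)"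
proof (induction t)
  case 0 then show ?case by simp
next
  case (Suc t)
  have "(\<Sum>i\<in>UNIV. yseq E (Suc t) i) = (\<Sum>i\<in>UNIV. \<Sum>j\<in>UNIV. mixW E i j * yseq E t j)"
    by (simp add: mat_vec_def)
  also have "\<dots> = (\<Sum>j\<in>UNIV. \<Sum>i\<in>UNIV. mixW E i j * yseq E t j)" by (rule sum.swap)
  also have "\<dots> = (\<Sum>j\<in>UNIV. yseq E t j)"
    by (simp add: colsum[OF loops] flip: sum_distrib_right)
  finally show ?case using Suc by simp
qed

lemma y_step:
  assumes loops: "\<forall>i. (i, i) \<in> E" and e: "(j, i) \<in> E"
  shows "yseq E (Suc t) (i::'n::finite) \<ge> yseq E t j / real CARD('n)"
proof -
  have "yseq E t j / real CARD('n) = (1 / real CARD('n)) * yseq E t j" by simp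
  also have "\<dots> \<le> mixW E i j * yseq E t j"
    by (rule mult_right_mono[OF W_edge[OF loops e] y_nonneg])
  also have "\<dots> \<le> (\<Sum>k\<in>UNIV. mixW E i k * yseq E t k)"
    by (rule member_le_sum) (auto simp: W_nonneg y_nonneg)
  finally show ?thesis by (simp add: mat_vec_def)
qed

lemma y_path:
  assumes loops: "\<forall>i. (i, i) \<in> E"
  shows "(j, i) \<in> E ^^ k \<Longrightarrow> yseq E (t + k) (i::'n::finite) \<ge> yseq E t j / real CARD('n) ^ k"
proof (induction k arbitrary: i)
  case 0 then show ?case by simp
next
  case (Suc k)
  then obtain m where m: "(j, m) \<in> E ^^ k" "(m, i) \<in> E" by auto
  have n1: "real CARD('n) \<ge> 1" by (rule card_pos_real)
  have "yseq E t j / real CARD('n) ^ Suc k = (yseq E t j / real CARD('n) ^ k) / real CARD('n)"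
    by (simp add: field_simps)
  also have "\<dots> \<le> yseq E (t + k) m / real CARD('n)"
    by (rule divide_right_mono[OF Suc.IH[OF m(1)]]) simp
  also have "\<dots> \<le> yseq E (Suc (t + k)) i" by (rule y_step[OF loops m(2)])
  finally show ?case by simp
qed

lemma self_pow:
  assumes loops: "\<forall>i. (i, i) \<in> E"
  shows "(i, i) \<in> E ^^ k"
  by (induction k) (use loops in auto)

lemma uniform_K:
  fixes E :: "('n::finite \<times> 'n) set"
  assumes loops: "\<forall>i. (i, i) \<in> E" and strong: "\<forall>i j. (i, j) \<in> E\<^sup>*"
  shows "\<exists>K. \<forall>j i. (j, i) \<in> E ^^ K"
proof -
  have "\<forall>j i. \<exists>k. (j, i) \<in> E ^^ k" using strong by (simp add: rtrancl_power)
  then obtain kf where kf: "\<And>j i. (j, i) \<in> E ^^ kf j i" by metis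
  define K where "K = Max (range (\<lambda>(p::'n \<times> 'n). kf (fst p) (snd p)))"
  have "\<forall>j i. (j, i) \<in> E ^^ K"
  proof (intro allI)
    fix j i
    have le: "kf j i \<le> K" unfolding K_def by (rule Max_ge) (auto intro!: image_eqI[of _ _ "(j, i)"])
    have "(j, i) \<in> E ^^ kf j i O E ^^ (K - kf j i)" using kf self_pow[OF loops] by blast
    then show "(j, i) \<in> E ^^ K" using le by (simp add: relpow_add[symmetric])
  qed
  then show ?thesis by blast
qed

lemma y_lower:
  assumes loops: "\<forall>i. (i, i) \<in> E" and strong: "\<forall>i j. (i, j) \<in> E\<^sup>*"
  shows "\<exists>c>0. \<forall>t i. yseq E t (i::'n::finite) \<ge> c"
proof -
  obtain K where K: "\<And>j i. (j, i) \<in> E ^^ K" using uniform_K[OF loops strong] by blast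
  let ?n = "real CARD('n)"
  have n1: "?n \<ge> 1" by (rule card_pos_real)
  have "yseq E t i \<ge> 1 / ?n ^ K" for t i
  proof (cases "K \<le> t")
    case True
    have "\<exists>j. yseq E (t - K) j \<ge> 1"
    proof (rule ccontr)
      assume "\<not> ?thesis"
      then have "\<forall>j. yseq E (t - K) j < 1" by (auto simp: not_le)
      then have "(\<Sum>j\<in>UNIV. yseq E (t - K) j) < (\<Sum>j\<in>(UNIV::'n set). 1)"
        by (intro sum_strict_mono) auto
      then show False using y_sum[OF loops, of "t - K"] by simp
    qed
    then obtain j where j: "yseq E (t - K) j \<ge> 1" by blast
    have "1 / ?n ^ K \<le> yseq E (t - K) j / ?n ^ K"
      using j n1 by (simp add: divide_right_mono)
    also have "\<dots> \<le> yseq E (t - K + K) i" by (rule y_path[OF loops K])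
    finally show ?thesis using True by simp
  next
    case False
    have "1 / ?n ^ K \<le> 1 / ?n ^ t"
      using False n1 by (intro divide_left_mono power_increasing) auto
    also have "\<dots> = yseq E 0 i / ?n ^ t" by simp
    also have "\<dots> \<le> yseq E (0 + t) i" by (rule y_path[OF loops self_pow[OF loops]])
    finally show ?thesis by simp
  qed
  moreover have "1 / ?n ^ K > 0" using n1 by simp
  ultimately show ?thesis by blast
qed

lemma delta_facts:
  assumes loops: "\<forall>i. (i, i) \<in> E" and strong: "\<forall>i j. (i, j) \<in> E\<^sup>*"
  shows "yseq E t (i::'n::finite) > 0" "1 / yseq E t i \<le> deltaY E"
proof -
  obtain c where c: "c > 0" "\<And>t i. yseq E t (i::'n) \<ge> c" using y_lower[OF loops strong] by blast
  show "yseq E t i > 0" using c by (meson less_le_trans)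
  have b: "1 / yseq E s j \<le> 1 / c" for s j using c by (meson frac_le order.refl less_le_trans zero_le_one)
  have mx: "Max (range (\<lambda>i. 1 / yseq E s i)) \<le> 1 / c" for s
    using b by (simp add: Max_le_iff)
  have bdd: "bdd_above (range (\<lambda>s. Max (range (\<lambda>i. 1 / yseq E s (i::'n)))))"
    by (rule bdd_aboveI[where M="1/c"]) (auto simp: mx)
  have "1 / yseq E t i \<le> Max (range (\<lambda>i. 1 / yseq E t i))" by (rule Max_ge) auto
  also have "\<dots> \<le> deltaY E" unfolding deltaY_def by (rule cSUP_upper[OF _ bdd]) auto
  finally show "1 / yseq E t i \<le> deltaY E" .
qed


lemma pi_norm_neg: "pi_norm \<pi> (\<lambda>i. a i - b i) = pi_norm \<pi> (\<lambda>i. b i - a i)"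
  unfolding pi_norm_def by (simp add: power2_commute)

lemma y_contract:
  fixes E :: "('n::finite \<times> 'n) set"
  assumes loops: "\<forall>i. (i, i) \<in> E"
    and pi_stat: "mat_vec (mixW E) \<pi> = \<pi>"
    and pos: "\<forall>i. \<pi> i > 0"
    and pi_sum: "(\<Sum>i\<in>UNIV. \<pi> i) = 1"
  shows "pi_norm \<pi> (\<lambda>i. real CARD('n) * \<pi> i - yseq E t i)
         \<le> sigmaW E \<pi> ^ t * pi_norm \<pi> (\<lambda>i. 1 - real CARD('n) * \<pi> i)"
proof -
  let ?n = "real CARD('n)"
  let ?D = "\<lambda>i j. mixW E i j - Winf \<pi> i j"
  have st: "(\<Sum>j\<in>UNIV. mixW E i j * \<pi> j) = \<pi> i" for i
    using fun_cong[OF pi_stat, of i] by (simp add: mat_vec_def)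
  have step: "mat_vec ?D (\<lambda>j. yseq E s j - ?n * \<pi> j) = (\<lambda>i. yseq E (Suc s) i - ?n * \<pi> i)" for s
  proof
    fix i
    have "mat_vec ?D (\<lambda>j. yseq E s j - ?n * \<pi> j) i
       = (\<Sum>j\<in>UNIV. mixW E i j * yseq E s j) - ?n * (\<Sum>j\<in>UNIV. mixW E i j * \<pi> j)
         - \<pi> i * (\<Sum>j\<in>UNIV. yseq E s j) + ?n * \<pi> i * (\<Sum>j\<in>UNIV. \<pi> j)"
      by (simp add: mat_vec_def Winf_def algebra_simps sum_subtractf sum.distrib sum_distrib_left sum_distrib_right)
    also have "\<dots> = yseq E (Suc s) i - ?n * \<pi> i"
      by (simp add: st y_sum[OF loops] pi_sum mat_vec_def)
    finally show "mat_vec ?D (\<lambda>j. yseq E s j - ?n * \<pi> j) i = yseq E (Suc s) i - ?n * \<pi> i" .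
  qed
  have "pi_norm \<pi> (\<lambda>i. yseq E t i - ?n * \<pi> i)
         \<le> sigmaW E \<pi> ^ t * pi_norm \<pi> (\<lambda>i. 1 - ?n * \<pi> i)"
  proof (induction t)
    case 0 then show ?case by simp
  next
    case (Suc s)
    have s0: "0 \<le> sigmaW E \<pi>" unfolding sigmaW_def by (rule opnorm_facts(1)[OF pos])
    have "pi_norm \<pi> (\<lambda>i. yseq E (Suc s) i - ?n * \<pi> i)
        = pi_norm \<pi> (mat_vec ?D (\<lambda>j. yseq E s j - ?n * \<pi> j))" by (simp add: step)
    also have "\<dots> \<le> sigmaW E \<pi> * pi_norm \<pi> (\<lambda>j. yseq E s j - ?n * \<pi> j)"
      unfolding sigmaW_def by (rule opnorm_facts(2)[OF pos])
    also have "\<dots> \<le> sigmaW E \<pi> * (sigmaW E \<pi> ^ s * pi_norm \<pi> (\<lambda>i. 1 - ?n * \<pi> i))"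
      by (rule mult_left_mono[OF Suc s0])
    finally show ?case by (simp add: mult_ac)
  qed
  then show ?thesis by (subst pi_norm_neg) 
qed

lemma bmat_D:
  fixes u :: "'n::finite \<Rightarrow> 'a::real_vector"
  shows "bmat (\<lambda>i j. mixW E i j - Winf \<pi> i j) u i = bmat (mixW E) u i - \<pi> i *\<^sub>R (\<Sum>j\<in>UNIV. u j)"
  by (simp add: bmat_def Winf_def scaleR_diff_left sum_subtractf scaleR_sum_right)

lemma bmat_lin:
  fixes u u' :: "'n::finite \<Rightarrow> 'a::real_vector"
  shows "bmat M (\<lambda>j. u j - a *\<^sub>R u' j) i = bmat M u i - a *\<^sub>R bmat M u' i"
  by (simp add: bmat_def scaleR_diff_right sum_subtractf scaleR_sum_right mult.commute)

lemma bmat_pi: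
  fixes c :: "'a::real_vector"
  assumes "mat_vec (mixW E) \<pi> = \<pi>"
  shows "bmat (mixW E) (\<lambda>j. \<pi> j *\<^sub>R c) i = \<pi> i *\<^sub>R c"
proof -
  have "(\<Sum>j\<in>UNIV. mixW E i j * \<pi> j) = \<pi> i"
    using fun_cong[OF assms, of i] by (simp add: mat_vec_def)
  then show ?thesis by (simp add: bmat_def scaleR_sum_left[symmetric])
qed


theorem proposition5p2:
  fixes E :: "('n::finite \<times> 'n) set"
    and \<pi> :: "'n \<Rightarrow> real"
    and f :: "'n \<Rightarrow> 'a::euclidean_space \<Rightarrow> real"
    and gradf :: "'n \<Rightarrow> 'a \<Rightarrow> 'a"
    and Li :: "'n \<Rightarrow> real"
    and \<beta> \<alpha> :: real
    and wstar :: 'a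
    and w0 :: "'n \<Rightarrow> 'a"
    and t :: nat
  assumes loops: "\<forall>i. (i, i) \<in> E"
    and strong: "\<forall>i j. (i, j) \<in> E\<^sup>*"
    and pi_stat: "mat_vec (mixW E) \<pi> = \<pi>"
    and pi_pos: "\<forall>i. \<pi> i > 0"
    and pi_sum: "(\<Sum>i\<in>UNIV. \<pi> i) = 1"
    and grad: "\<forall>i x. (f i has_derivative (\<lambda>h. gradf i x \<bullet> h)) (at x)"
    and F1: "\<forall>i. (Li i)-lipschitz_on UNIV (gradf i)"
    and F2: "\<beta> > 0" "strongly_convex_on \<beta> UNIV (\<lambda>x. (1 / real CARD('n)) * (\<Sum>i\<in>UNIV. f i x))"
    and wstar_min: "\<forall>x. (1 / real CARD('n)) * (\<Sum>i\<in>UNIV. f i wstar)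
                       \<le> (1 / real CARD('n)) * (\<Sum>i\<in>UNIV. f i x)"
    and alpha_pos: "\<alpha> > 0"
  shows
    "let n = real CARD('n);
         L = Max (range Li);
         \<sigma> = sigmaW E \<pi>;
         \<delta> = deltaY E;
         w = wseq E \<alpha> gradf w0;
         c = pi_norm \<pi> (\<lambda>i. 1 - n * \<pi> i);
         D1 = \<delta> * c * \<sigma> ^ t + sqrt (\<Sum>j\<in>UNIV. 1 / \<pi> j);
         D2 = L * \<delta> * c * \<sigma> ^ t * norm wstar + blk_norm \<pi> (\<lambda>i. gradf i wstar)
     in blk_norm \<pi> (\<lambda>i. w (Suc t) i - (n * \<pi> i) *\<^sub>R wbar (w (Suc t)))
        \<le> \<sigma> * (1 + \<alpha> * L * \<delta>) * blk_norm \<pi> (\<lambda>i. w t i - (n * \<pi> i) *\<^sub>R wbar (w t))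
          + \<alpha> * L * \<sigma> * D1 * norm (wbar (w t) - wstar)
          + \<alpha> * \<sigma> * D2"
proof -
  define n where "n = real CARD('n)"
  define L where "L = Max (range Li)"
  define \<sigma> where "\<sigma> = sigmaW E \<pi>"
  define \<delta> where "\<delta> = deltaY E"
  define w where "w = wseq E \<alpha> gradf w0"
  define c where "c = pi_norm \<pi> (\<lambda>i. 1 - n * \<pi> i)"
  define S where "S = sqrt (\<Sum>j\<in>UNIV. 1 / \<pi> j)"
  define G where "G = blk_norm \<pi> (\<lambda>i. gradf i wstar)"
  define y where "y = yseq E t"
  define wb where "wb = wbar (w t)"
  define v where "v = (\<lambda>i. w t i - (n * \<pi> i) *\<^sub>R wb)"
  define g where "g = (\<lambda>j. gradf j ((1 / y j) *\<^sub>R w t j))"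
  define x where "x = (\<lambda>j. w t j - \<alpha> *\<^sub>R g j)"
  define Dm where "Dm = (\<lambda>i j. mixW E i j - Winf \<pi> i j)"
  define e where "e = norm (wb - wstar)"
  define A where "A = blk_norm \<pi> v"
  define B where "B = blk_norm \<pi> g"
  define Z where "Z = blk_norm \<pi> (\<lambda>i. (1 / y i) *\<^sub>R w t i - wstar)"
  define P where "P = pi_norm \<pi> (\<lambda>i. n * \<pi> i - y i)"
  have n1: "n \<ge> 1" unfolding n_def by (rule card_pos_real)
  have s0: "0 \<le> \<sigma>" unfolding \<sigma>_def sigmaW_def by (rule opnorm_facts(1)[OF pi_pos])
  have ypos: "\<And>i. y i > 0" unfolding y_def by (rule delta_facts(1)[OF loops strong])
  have yd: "\<And>i. 1 / y i \<le> \<delta>" unfolding y_def \<delta>_def by (rule delta_facts(2)[OF loops strong])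
  have d0: "0 \<le> \<delta>" using yd[of undefined] ypos[of undefined]
    by (meson less_eq_real_def order_trans zero_le_divide_1_iff)
  have Lge: "\<And>i. Li i \<le> L" unfolding L_def by (rule Max_ge) auto
  have L0: "0 \<le> L" using Lge[of undefined] lipschitz_on_nonneg[of "Li undefined"] F1 by (meson order_trans)
  have a0: "0 \<le> \<alpha>" using alpha_pos by simp
  have A0: "0 \<le> A" unfolding A_def by (simp add: blk_wl2[OF pi_pos] wl2_nonneg)
  have B0: "0 \<le> B" unfolding B_def by (simp add: blk_wl2[OF pi_pos] wl2_nonneg)
  have Z0: "0 \<le> Z" unfolding Z_def by (simp add: blk_wl2[OF pi_pos] wl2_nonneg)
  have P0: "0 \<le> P" unfolding P_def by (rule pi_norm_nonneg[OF pi_pos])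
  have e0: "0 \<le> e" unfolding e_def by simp
  have S0: "0 \<le> S" unfolding S_def by (simp add: sum_nonneg less_imp_le pi_pos)
  have G0: "0 \<le> G" unfolding G_def by (simp add: blk_wl2[OF pi_pos] wl2_nonneg)

  have wS: "w (Suc t) = bmat (mixW E) x"
    by (simp add: w_def x_def g_def y_def bmat_def)
  have wbS: "wbar (w (Suc t)) = wbar x"
  proof -
    have "(\<Sum>i\<in>UNIV. bmat (mixW E) x i) = (\<Sum>j\<in>UNIV. \<Sum>i\<in>UNIV. mixW E i j *\<^sub>R x j)"
      unfolding bmat_def by (rule sum.swap)
    also have "\<dots> = (\<Sum>j\<in>UNIV. x j)" by (simp add: colsum[OF loops] flip: scaleR_sum_left)
    finally show ?thesis by (simp add: wS wbar_def)
  qed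
  have lhs_eq: "(\<lambda>i. w (Suc t) i - (n * \<pi> i) *\<^sub>R wbar (w (Suc t))) = bmat Dm x"
  proof
    fix i
    have "(n * \<pi> i) *\<^sub>R wbar x = \<pi> i *\<^sub>R (\<Sum>j\<in>UNIV. x j)"
      using n1 by (simp add: wbar_def n_def)
    then show "w (Suc t) i - (n * \<pi> i) *\<^sub>R wbar (w (Suc t)) = bmat Dm x i"
      unfolding wbS by (simp add: wS Dm_def bmat_D)
  qed
  have Dpi: "bmat Dm (\<lambda>j. (n * \<pi> j) *\<^sub>R wb) i = 0" for i
  proof -
    have "bmat (mixW E) (\<lambda>j. \<pi> j *\<^sub>R (n *\<^sub>R wb)) i = \<pi> i *\<^sub>R (n *\<^sub>R wb)"
      by (rule bmat_pi[OF pi_stat])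
    then show ?thesis
      by (simp add: Dm_def bmat_D pi_sum mult.commute flip: scaleR_sum_left sum_distrib_left)
  qed
  have x_split: "bmat Dm x i = bmat Dm v i - \<alpha> *\<^sub>R bmat Dm g i" for i
  proof -
    have "bmat Dm v i = bmat Dm (w t) i"
      using bmat_lin[of Dm "w t" 1 "\<lambda>j. (n * \<pi> j) *\<^sub>R wb" i] Dpi[of i] by (simp add: v_def)
    moreover have "bmat Dm x i = bmat Dm (w t) i - \<alpha> *\<^sub>R bmat Dm g i"
      unfolding x_def by (rule bmat_lin)
    ultimately show ?thesis by simp
  qed
  have step1: "blk_norm \<pi> (bmat Dm x) \<le> \<sigma> * A + \<alpha> * (\<sigma> * B)"
  proof -
    have "blk_norm \<pi> (bmat Dm x) \<le> 1 * blk_norm \<pi> (bmat Dm v) + \<alpha> * blk_norm \<pi> (bmat Dm g)"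
      unfolding blk_wl2[OF pi_pos]
      by (rule wl2_bound2[OF pi_pos]) (auto simp: x_split a0 norm_triangle_ineq4[THEN order_trans])
    also have "\<dots> \<le> \<sigma> * A + \<alpha> * (\<sigma> * B)"
      unfolding A_def B_def \<sigma>_def sigmaW_def Dm_def[symmetric]
      by (intro add_mono mult_left_mono a0 blk_opnorm[OF pi_pos]) (simp add: blk_opnorm[OF pi_pos])
    finally show ?thesis .
  qed
  have step2: "B \<le> L * Z + 1 * G"
    unfolding B_def Z_def G_def blk_wl2[OF pi_pos]
  proof (rule wl2_bound2[OF pi_pos])
    show "\<forall>i. norm (g i) \<le> L * norm ((1 / y i) *\<^sub>R w t i - wstar) + 1 * norm (gradf i wstar)"
    proof
      fix i
      let ?z = "(1 / y i) *\<^sub>R w t i"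
      have "norm (g i) \<le> norm (gradf i wstar) + norm (g i - gradf i wstar)"
        by (rule norm_triangle_sub)
      moreover have "norm (g i - gradf i wstar) \<le> Li i * norm (?z - wstar)"
        using lipschitz_onD[OF F1[rule_format, of i], of ?z wstar]
        by (simp add: g_def dist_norm)
      moreover have "Li i * norm (?z - wstar) \<le> L * norm (?z - wstar)"
        by (rule mult_right_mono[OF Lge]) simp
      ultimately show "norm (g i) \<le> L * norm (?z - wstar) + 1 * norm (gradf i wstar)" by simp
    qed
  qed (auto simp: L0)
  have step3: "Z \<le> \<delta> * A + (\<delta> * (e + norm wstar)) * P + e * S"
  proof -
    have "wl2 \<pi> (\<lambda>i. norm ((1 / y i) *\<^sub>R w t i - wstar))
       \<le> \<delta> * wl2 \<pi> (\<lambda>i. norm (v i)) + (\<delta> * (e + norm wstar)) * wl2 \<pi> (\<lambda>i. \<bar>n * \<pi> i - y i\<bar>)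
         + e * wl2 \<pi> (\<lambda>i. 1)"
    proof (rule wl2_bound3[OF pi_pos])
      show "\<forall>i. norm ((1 / y i) *\<^sub>R w t i - wstar)
           \<le> \<delta> * norm (v i) + \<delta> * (e + norm wstar) * \<bar>n * \<pi> i - y i\<bar> + e * 1"
      proof
        fix i
        have yi: "y i > 0" by (rule ypos)
        have id: "(1 / y i) *\<^sub>R w t i - wstar
            = (1 / y i) *\<^sub>R v i + ((n * \<pi> i - y i) / y i) *\<^sub>R wb + (wb - wstar)"
          using yi by (simp add: v_def scaleR_diff_right diff_divide_distrib algebra_simps)
        have "norm ((1 / y i) *\<^sub>R w t i - wstar)
            \<le> norm ((1 / y i) *\<^sub>R v i) + norm (((n * \<pi> i - y i) / y i) *\<^sub>R wb) + norm (wb - wstar)"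
          unfolding id by (rule order_trans[OF norm_triangle_ineq add_right_mono[OF norm_triangle_ineq]])
        also have "\<dots> = (1 / y i) * norm (v i) + (1 / y i) * (\<bar>n * \<pi> i - y i\<bar> * norm wb) + e"
          using yi by (simp add: e_def abs_div)
        also have "\<dots> \<le> \<delta> * norm (v i) + \<delta> * (\<bar>n * \<pi> i - y i\<bar> * (e + norm wstar)) + e"
        proof -
          have wbn: "norm wb \<le> e + norm wstar"
            using norm_triangle_sub[of wb wstar] by (simp add: e_def)
          have "(1 / y i) * norm (v i) \<le> \<delta> * norm (v i)"
            by (rule mult_right_mono[OF yd]) simp
          moreover have "(1 / y i) * (\<bar>n * \<pi> i - y i\<bar> * norm wb)
               \<le> \<delta> * (\<bar>n * \<pi> i - y i\<bar> * (e + norm wstar))"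
            by (intro mult_mono yd mult_left_mono wbn) (auto simp: d0)
          ultimately show ?thesis by simp
        qed
        finally show "norm ((1 / y i) *\<^sub>R w t i - wstar)
           \<le> \<delta> * norm (v i) + \<delta> * (e + norm wstar) * \<bar>n * \<pi> i - y i\<bar> + e * 1"
          by (simp add: mult_ac)
      qed
    qed (auto simp: d0 e0)
    then show ?thesis
      by (simp add: Z_def A_def P_def S_def blk_wl2[OF pi_pos] pi_wl2[OF pi_pos] wl2_const[OF pi_pos])
  qed
  have step4: "P \<le> \<sigma> ^ t * c"
    unfolding P_def \<sigma>_def c_def n_def y_def
    by (rule y_contract[OF loops pi_stat pi_pos pi_sum])
  have final: "blk_norm \<pi> (bmat Dm x)
      \<le> \<sigma> * (1 + \<alpha> * L * \<delta>) * A + \<alpha> * L * \<sigma> * (\<delta> * c * \<sigma> ^ t + S) * e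
        + \<alpha> * \<sigma> * (L * \<delta> * c * \<sigma> ^ t * norm wstar + G)"
  proof -
    have "Z \<le> \<delta> * A + (\<delta> * (e + norm wstar)) * (\<sigma> ^ t * c) + e * S"
      using step3 step4 mult_left_mono[OF step4, of "\<delta> * (e + norm wstar)"] d0 e0
      by (smt (verit) norm_ge_zero zero_le_mult_iff)
    then have "B \<le> L * (\<delta> * A + (\<delta> * (e + norm wstar)) * (\<sigma> ^ t * c) + e * S) + G"
      using step2 mult_left_mono[of Z _ L] L0 by (smt (verit))
    then have "\<sigma> * A + \<alpha> * (\<sigma> * B) \<le> \<sigma> * A + \<alpha> * (\<sigma> * (L * (\<delta> * A + (\<delta> * (e + norm wstar)) * (\<sigma> ^ t * c) + e * S) + G))"
      using a0 s0 by (simp add: mult_left_mono)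
    also have "\<dots> = \<sigma> * (1 + \<alpha> * L * \<delta>) * A + \<alpha> * L * \<sigma> * (\<delta> * c * \<sigma> ^ t + S) * e
        + \<alpha> * \<sigma> * (L * \<delta> * c * \<sigma> ^ t * norm wstar + G)"
      by (simp add: algebra_simps)
    finally show ?thesis using step1 by linarith
  qed
  show ?thesis
    using final
    unfolding Let_def lhs_eq[symmetric]
    by (simp add: n_def L_def \<sigma>_def \<delta>_def w_def c_def S_def G_def A_def v_def wb_def e_def)
qed

end
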